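(* Let $q\in X^*\setminus\{e\}$ and $\xi\in X^\omega$. The following are equivalent: (i) $\xi$ is quasiperiodic with quasiperiod $q$; (ii) the set $\mathrm{pref}(\xi)\cap Q_q$ is infinite; (iii) $\mathrm{pref}(\xi)\subseteq\mathrm{pref}(Q_q)$.
   Context: $X$ is a finite alphabet with $|X|\ge 2$; $X^*$ the finite words (empty word $e$), $X^\omega$ the infinite words; $|w|$ is length; $w\sqsubseteq\eta$ means $w$ is a prefix of $\eta$. For $B\subseteq X^*\cup X^\omega$ (or a single word), $\mathrm{pref}(B)$ is the set of all finite prefixes of elements of $B$. A word $\eta\in X^*\cup X^\omega$ is quasiperiodic with quasiperiod $q\in X^*\setminus\{e\}$ if for every natural number $j<|\eta|$ there is a prefix $u_j\sqsubseteq\eta$ with $j-|q|<|u_j|\le j$ and $u_j\cdot q\sqsubseteq\eta$. $Q_q$ is the set of finite words quasiperiodic with quasiperiod $q$ (including $e$). *)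

theory Defs
  imports Main "HOL-Library.Sublist"
begin

definition iprefix :: "'a list \<Rightarrow> (nat \<Rightarrow> 'a) \<Rightarrow> bool" where
  "iprefix w \<xi> \<longleftrightarrow> (\<forall>i < length w. w ! i = \<xi> i)"

definition ipref :: "(nat \<Rightarrow> 'a) \<Rightarrow> 'a list set" where
  "ipref \<xi> = {w. iprefix w \<xi>}"

definition pref :: "'a list set \<Rightarrow> 'a list set" where
  "pref B = {w. \<exists>v\<in>B. prefix w v}"

text \<open>Quasiperiodicity; the condition j - |q| < |u| is written as j < |u| + |q|
  to avoid truncated subtraction.\<close>

definition quasiperiodic_fin :: "'a list \<Rightarrow> 'a list \<Rightarrow> bool" where
  "quasiperiodic_fin q \<eta> \<longleftrightarrow>
     (\<forall>j < length \<eta>. \<exists>u. prefix u \<eta> \<and> j < length u + length q \<and> length u \<le> j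
                         \<and> prefix (u @ q) \<eta>)"

definition quasiperiodic_inf :: "'a list \<Rightarrow> (nat \<Rightarrow> 'a) \<Rightarrow> bool" where
  "quasiperiodic_inf q \<xi> \<longleftrightarrow>
     (\<forall>j. \<exists>u. iprefix u \<xi> \<and> j < length u + length q \<and> length u \<le> j
              \<and> iprefix (u @ q) \<xi>)"

definition Q :: "'a set \<Rightarrow> 'a list \<Rightarrow> 'a list set" where
  "Q X q = {w \<in> lists X. quasiperiodic_fin q w}"

end

theory Submission
  imports Defs "HOL-Library.Infinite_Set"
begin

definition pre :: "(nat \<Rightarrow> 'a) \<Rightarrow> nat \<Rightarrow> 'a list" where
  "pre \<xi> n = map \<xi> [0..<n]"

lemma iprefix_iff: "iprefix w \<xi> \<longleftrightarrow> w = pre \<xi> (length w)"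
  unfolding iprefix_def pre_def
proof
  assume h: "\<forall>i<length w. w ! i = \<xi> i"
  show "w = map \<xi> [0..<length w]" by (rule nth_equalityI) (simp_all add: h)
next
  assume e: "w = map \<xi> [0..<length w]"
  show "\<forall>i<length w. w ! i = \<xi> i"
  proof (intro allI impI)
    fix i assume i: "i < length w"
    have "w ! i = map \<xi> [0..<length w] ! i" using e by (rule arg_cong[where f="\<lambda>x. x ! i"])
    also have "\<dots> = \<xi> i" using i by simp
    finally show "w ! i = \<xi> i" .
  qed
qed

lemma len_pre[simp]: "length (pre \<xi> n) = n"
  by (simp add: pre_def)

lemma pre_add: "pre \<xi> (k + m) = pre \<xi> k @ map \<xi> [k..<k+m]"
  unfolding pre_def by (simp only: upt_add_eq_append[OF le0] map_append)

lemma prefix_pre: "prefix u (pre \<xi> n) \<longleftrightarrow> length u \<le> n \<and> iprefix u \<xi>"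
proof
  assume "prefix u (pre \<xi> n)"
  then obtain z where z: "pre \<xi> n = u @ z" by (auto simp: prefix_def)
  have "length (pre \<xi> n) = length (u @ z)" using z by simp
  hence "length u \<le> n" by simp
  moreover have "iprefix u \<xi>" unfolding iprefix_def
  proof (intro allI impI)
    fix i assume "i < length u"
    hence "(u @ z) ! i = u ! i" by (simp add: nth_append)
    moreover have "pre \<xi> n ! i = \<xi> i" using \<open>length u \<le> n\<close> \<open>i < length u\<close> by (simp add: pre_def)
    ultimately show "u ! i = \<xi> i" using z by simp
  qed
  ultimately show "length u \<le> n \<and> iprefix u \<xi>" by simp
next
  assume a: "length u \<le> n \<and> iprefix u \<xi>"
  then obtain m where m: "n = length u + m" using le_Suc_ex by blast
  have e: "u = pre \<xi> (length u)" using a by (simp add: iprefix_iff)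
  have "pre \<xi> n = pre \<xi> (length u) @ map \<xi> [length u..<length u+m]" unfolding m by (rule pre_add)
  also have "\<dots> = u @ map \<xi> [length u..<length u+m]" by (simp only: e[symmetric])
  finally show "prefix u (pre \<xi> n)" by (simp add: prefix_def)
qed

lemma ipref_eq: "ipref \<xi> = range (pre \<xi>)"
  unfolding ipref_def by (auto simp: iprefix_iff)

lemma inj_pre: "inj (pre \<xi>)"
  by (rule injI) (metis len_pre)

lemma pre_lists: "range \<xi> \<subseteq> X \<Longrightarrow> pre \<xi> n \<in> lists X"
  by (auto simp: pre_def image_subset_iff)

lemma iprefix_app: "iprefix (u @ v) \<xi> \<Longrightarrow> iprefix u \<xi>"
  unfolding iprefix_def
proof (intro allI impI)
  fix i assume a: "\<forall>i<length (u @ v). (u @ v) ! i = \<xi> i" and i: "i < length u"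
  hence "(u @ v) ! i = \<xi> i" by simp
  thus "u ! i = \<xi> i" using i by (simp add: nth_append)
qed

lemma infinite_unbounded:
  assumes "infinite S" "S \<subseteq> range (pre \<xi>)"
  shows "\<exists>m\<ge>n. pre \<xi> m \<in> S"
proof (rule ccontr)
  assume na: "\<not> ?thesis"
  have "S \<subseteq> pre \<xi> ` {..<n}"
  proof
    fix x assume x: "x \<in> S"
    then obtain m where m: "x = pre \<xi> m" using assms(2) by blast
    hence "m < n" using na x by (auto simp: not_le)
    thus "x \<in> pre \<xi> ` {..<n}" using m by blast
  qed
  thus False using assms(1) finite_subset by blast
qed

theorem corollary2:
  fixes X :: "'a set" and q :: "'a list" and \<xi> :: "nat \<Rightarrow> 'a"
  assumes "finite X" and "card X \<ge> 2"
    and "q \<in> lists X" and "q \<noteq> []"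
    and "range \<xi> \<subseteq> X"
  shows "(quasiperiodic_inf q \<xi> \<longleftrightarrow> infinite (ipref \<xi> \<inter> Q X q))
       \<and> (infinite (ipref \<xi> \<inter> Q X q) \<longleftrightarrow> ipref \<xi> \<subseteq> pref (Q X q))"
proof -
  let ?S = "ipref \<xi> \<inter> Q X q"
  have AB: "infinite ?S" if qp: "quasiperiodic_inf q \<xi>"
  proof -
    let ?M = "{length u + length q | u. iprefix (u @ q) \<xi>}"
    have inQ: "pre \<xi> m \<in> ?S" if "m \<in> ?M" for m
    proof -
      from that obtain u where m: "m = length u + length q" and uq: "iprefix (u @ q) \<xi>" by blast
      have "quasiperiodic_fin q (pre \<xi> m)" unfolding quasiperiodic_fin_def
      proof (intro allI impI)
        fix j assume j: "j < length (pre \<xi> m)"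
        show "\<exists>u'. prefix u' (pre \<xi> m) \<and> j < length u' + length q \<and> length u' \<le> j
                         \<and> prefix (u' @ q) (pre \<xi> m)"
        proof (cases "length u \<le> j")
          case True
          have "iprefix u \<xi>" using uq by (rule iprefix_app)
          thus ?thesis using True j uq m by (intro exI[of _ u]) (auto simp: prefix_pre)
        next
          case False
          from qp obtain u' where u': "iprefix u' \<xi>" "j < length u' + length q" "length u' \<le> j"
            "iprefix (u' @ q) \<xi>" unfolding quasiperiodic_inf_def by blast
          thus ?thesis using False m by (intro exI[of _ u']) (auto simp: prefix_pre)
        qed
      qed
      thus ?thesis using assms(5) by (auto simp: ipref_eq Q_def pre_lists)
    qed
    have "infinite ?M" unfolding infinite_nat_iff_unbounded_le
    proof
      fix n
      from qp obtain u where "iprefix u \<xi>" "n < length u + length q" "length u \<le> n"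
            "iprefix (u @ q) \<xi>" unfolding quasiperiodic_inf_def by blast
      thus "\<exists>m\<ge>n. m \<in> ?M" by (intro exI[of _ "length u + length q"]) auto
    qed
    hence "infinite (pre \<xi> ` ?M)" using finite_imageD inj_on_subset[OF inj_pre subset_UNIV] by blast
    moreover have "pre \<xi> ` ?M \<subseteq> ?S" using inQ by blast
    ultimately show ?thesis using finite_subset by blast
  qed
  have BC: "ipref \<xi> \<subseteq> pref (Q X q)" if inf: "infinite ?S"
  proof
    fix w assume "w \<in> ipref \<xi>"
    then obtain n where w: "w = pre \<xi> n" by (auto simp: ipref_eq)
    obtain m where "m \<ge> n" "pre \<xi> m \<in> ?S"
      using infinite_unbounded[OF inf, of \<xi> n] by (auto simp: ipref_eq)
    moreover have "prefix w (pre \<xi> m)" using \<open>m \<ge> n\<close> w by (simp add: prefix_pre iprefix_iff)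
    ultimately show "w \<in> pref (Q X q)" by (auto simp: pref_def)
  qed
  have CA: "quasiperiodic_inf q \<xi>" if c: "ipref \<xi> \<subseteq> pref (Q X q)"
    unfolding quasiperiodic_inf_def
  proof
    fix j
    have "pre \<xi> (j + length q) \<in> pref (Q X q)" using c by (auto simp: ipref_eq)
    then obtain v where v: "v \<in> Q X q" "prefix (pre \<xi> (j + length q)) v" by (auto simp: pref_def)
    have "0 < length q" using assms(4) by simp
    moreover have "length (pre \<xi> (j + length q)) \<le> length v" by (rule prefix_length_le[OF v(2)])
    hence "j + length q \<le> length v" by simp
    with \<open>0 < length q\<close> have "j < length v" by linarith
    then obtain u where u: "prefix u v" "j < length u + length q" "length u \<le> j" "prefix (u @ q) v"
      using v(1) by (auto simp: Q_def quasiperiodic_fin_def)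
    have l: "length (u @ q) \<le> j + length q" using u(3) by simp
    have "prefix (u @ q) (pre \<xi> (j + length q))"
      using prefix_length_prefix[OF u(4) v(2)] l by simp
    hence uqi: "iprefix (u @ q) \<xi>" by (simp add: prefix_pre)
    have "iprefix u \<xi>" using uqi by (rule iprefix_app)
    with uqi show "\<exists>u. iprefix u \<xi> \<and> j < length u + length q \<and> length u \<le> j \<and> iprefix (u @ q) \<xi>"
      using u by blast
  qed
  have "quasiperiodic_inf q \<xi> \<longleftrightarrow> infinite ?S"
  proof
    assume "quasiperiodic_inf q \<xi>" thus "infinite ?S" by (rule AB)
  next
    assume "infinite ?S" thus "quasiperiodic_inf q \<xi>" by (intro CA BC)
  qed
  moreover have "infinite ?S \<longleftrightarrow> ipref \<xi> \<subseteq> pref (Q X q)"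
  proof
    assume "infinite ?S" thus "ipref \<xi> \<subseteq> pref (Q X q)" by (rule BC)
  next
    assume "ipref \<xi> \<subseteq> pref (Q X q)" thus "infinite ?S" by (intro AB CA)
  qed
  ultimately show ?thesis by (rule conjI)
qed

end
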